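(* Let $G=(V,E)$ be a fixed graph, $v,u$ two non-adjacent vertices, and $k$ an integer. Assume that for some $\alpha\in[0,1]$, for all $c,q\in[k]$ with $c\ne q$, the set $\Omega(c,c)$ is $\alpha$-isomorphic to $\Omega(q,c)$ with $\alpha$-function $H(\cdot,q)$. Let $\nu$ be the uniform distribution over the good $k$-colourings of $G$, and let $\nu'$ be the distribution of the output of STEP when its input colouring is uniformly distributed over the $k$-colourings of $G$. Then $\|\nu-\nu'\|\le\alpha$.
   Context: $[k]=\{1,\dots,k\}$; $\Omega$ is the set of proper $k$-colourings of $G$ (assumed non-empty), $\sigma_w$ the colour of $w$, and $\Omega(c,q)$ the set of $\sigma\in\Omega$ with $\sigma_v=c,\sigma_u=q$. A colouring $\sigma$ is good if $\sigma_v\ne\sigma_u$ and bad otherwise. $\|\nu_a-\nu_b\|=\max_{A\subseteq[k]^V}|\nu_a(A)-\nu_b(A)|$. Disagreement graph: for $\sigma\in\Omega$ and $q\ne\sigma_v$, $Q_{\sigma_v,q}$ is the subgraph induced by all vertices reachable from $v$ by a path in $G$ all of whose vertices have colour in $\{\sigma_v,q\}$. The $q$-switching $H(\sigma,q)$ swaps the colours $\sigma_v$ and $q$ on the vertices of $Q_{\sigma_v,q}$, leaving other vertices unchanged. STEP: on input $X\in\Omega$, if $X$ is good output $X$; if $X$ is bad choose $q$ uniformly at random from $[k]\setminus\{X(v)\}$ and output $H(X,q)$. $\alpha$-isomorphism: $\Omega_1$ is $\alpha$-isomorphic to $\Omega_2$ if there exist $\Omega_1'\subseteq\Omega_1$,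 $\Omega_2'\subseteq\Omega_2$ with $|\Omega_i'|\ge(1-\alpha)|\Omega_i|$ ($i=1,2$) and a bijection $h:\Omega_1'\to\Omega_2'$; a map $F:\Omega_1\to[k]^V$ is an $\alpha$-function (for such a pair and bijection) if $F(\sigma)=h(\sigma)$ for all $\sigma\in\Omega_1'$. *)

theory Defs
  imports "HOL-Probability.Probability"
begin

definition simple_graph :: "'a set \<Rightarrow> ('a \<Rightarrow> 'a \<Rightarrow> bool) \<Rightarrow> bool" where
  "simple_graph V E \<longleftrightarrow> finite V \<and> (\<forall>x y. E x y \<longrightarrow> x \<in> V \<and> y \<in> V)
     \<and> (\<forall>x y. E x y \<longrightarrow> E y x) \<and> (\<forall>x. \<not> E x x)"

definition colourings :: "'a set \<Rightarrow> ('a \<Rightarrow> 'a \<Rightarrow> bool) \<Rightarrow> nat \<Rightarrow> ('a \<Rightarrow> nat) set" where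
  "colourings V E k = {\<sigma> \<in> V \<rightarrow>\<^sub>E {1..k}. \<forall>x\<in>V. \<forall>y\<in>V. E x y \<longrightarrow> \<sigma> x \<noteq> \<sigma> y}"

definition colourings_vu :: "'a set \<Rightarrow> ('a \<Rightarrow> 'a \<Rightarrow> bool) \<Rightarrow> nat \<Rightarrow> 'a \<Rightarrow> 'a \<Rightarrow> nat \<Rightarrow> nat \<Rightarrow> ('a \<Rightarrow> nat) set" where
  "colourings_vu V E k v u c q = {\<sigma> \<in> colourings V E k. \<sigma> v = c \<and> \<sigma> u = q}"

definition good :: "'a \<Rightarrow> 'a \<Rightarrow> ('a \<Rightarrow> nat) \<Rightarrow> bool" where
  "good v u \<sigma> \<longleftrightarrow> \<sigma> v \<noteq> \<sigma> u"

definition disagreement :: "'a set \<Rightarrow> ('a \<Rightarrow> 'a \<Rightarrow> bool) \<Rightarrow> 'a \<Rightarrow> ('a \<Rightarrow> nat) \<Rightarrow> nat \<Rightarrow> 'a set" where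
  "disagreement V E v \<sigma> q =
     {w. (\<lambda>x y. E x y \<and> x \<in> V \<and> y \<in> V \<and> \<sigma> x \<in> {\<sigma> v, q} \<and> \<sigma> y \<in> {\<sigma> v, q})\<^sup>*\<^sup>* v w}"

definition switching :: "'a set \<Rightarrow> ('a \<Rightarrow> 'a \<Rightarrow> bool) \<Rightarrow> 'a \<Rightarrow> ('a \<Rightarrow> nat) \<Rightarrow> nat \<Rightarrow> ('a \<Rightarrow> nat)" where
  "switching V E v \<sigma> q = (\<lambda>w. if w \<in> disagreement V E v \<sigma> q
       then (if \<sigma> w = \<sigma> v then q else if \<sigma> w = q then \<sigma> v else \<sigma> w) else \<sigma> w)"

definition STEP :: "'a set \<Rightarrow> ('a \<Rightarrow> 'a \<Rightarrow> bool) \<Rightarrow> nat \<Rightarrow> 'a \<Rightarrow> 'a \<Rightarrow> ('a \<Rightarrow> nat) \<Rightarrow> ('a \<Rightarrow> nat) pmf" where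
  "STEP V E k v u X = (if good v u X then return_pmf X
     else map_pmf (\<lambda>q. switching V E v X q) (pmf_of_set ({1..k} - {X v})))"

definition alpha_iso_fun :: "real \<Rightarrow> 'b set \<Rightarrow> 'c set \<Rightarrow> ('b \<Rightarrow> 'c) \<Rightarrow> bool" where
  "alpha_iso_fun \<alpha> \<Omega>1 \<Omega>2 F \<longleftrightarrow> (\<exists>\<Omega>1' \<Omega>2' h. \<Omega>1' \<subseteq> \<Omega>1 \<and> \<Omega>2' \<subseteq> \<Omega>2
      \<and> real (card \<Omega>1') \<ge> (1 - \<alpha>) * real (card \<Omega>1)
      \<and> real (card \<Omega>2') \<ge> (1 - \<alpha>) * real (card \<Omega>2)
      \<and> bij_betw h \<Omega>1' \<Omega>2' \<and> (\<forall>\<sigma>\<in>\<Omega>1'. F \<sigma> = h \<sigma>))"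

definition tv_dist :: "('a \<Rightarrow> nat) set \<Rightarrow> ('a \<Rightarrow> nat) pmf \<Rightarrow> ('a \<Rightarrow> nat) pmf \<Rightarrow> real" where
  "tv_dist S p q = (SUP A \<in> Pow S. \<bar>measure_pmf.prob p A - measure_pmf.prob q A\<bar>)"

end

theory Submission
  imports Defs
begin

lemma arith_core:
  fixes g b w K a :: real
  assumes g: "g > 0" and b: "b \<ge> 0" and K: "K \<ge> 1" and a0: "0 \<le> a" and a1: "a \<le> 1"
    and w1: "w \<le> g" and w2: "w \<ge> (1-a)*g" and w3: "w \<ge> (1-a)*K*b"
  shows "(g-w)*max 0 (1/g - 1/(g+b)) + w * max 0 (1/g - 1/(g+b) - 1/((g+b)*K)) \<le> a"
proof -
  define n where "n = g + b"
  have n: "n > 0" using g b n_def by simp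
  have d1: "1/g - 1/n = b/(g*n)" using g n n_def by (simp add: field_simps)
  have d1nn: "b/(g*n) \<ge> 0" using g n b by simp
  have bn: "b/n \<le> 1" using n b n_def g by simp
  have bn0: "b/n \<ge> 0" using n b by simp
  show ?thesis
  proof (cases "1/g - 1/n - 1/(n*K) \<le> 0")
    case True
    have "(g-w)*max 0 (1/g - 1/n) + w * max 0 (1/g - 1/n - 1/(n*K)) = (g-w)*(b/(g*n))"
      using True d1 d1nn by simp
    also have "\<dots> \<le> (a*g)*(b/(g*n))"
      using w2 d1nn by (intro mult_right_mono) (auto simp: algebra_simps)
    also have "\<dots> = a*(b/n)" using g by (simp add: field_simps)
    also have "\<dots> \<le> a" by (rule mult_left_le[OF bn a0])
    finally show ?thesis unfolding n_def .
  next
    case False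
    have "(g-w)*max 0 (1/g - 1/n) + w * max 0 (1/g - 1/n - 1/(n*K))
        = (g-w)*(b/(g*n)) + w*(b/(g*n) - 1/(n*K))"
      using False d1 d1nn by simp
    also have "\<dots> = b/n - w/(n*K)" using g n K by (simp add: field_simps)
    also have "\<dots> \<le> b/n - ((1-a)*K*b)/(n*K)"
      using w3 n K by (intro diff_left_mono divide_right_mono) auto
    also have "\<dots> = a*(b/n)" using n K by (simp add: field_simps)
    also have "\<dots> \<le> a" by (rule mult_left_le[OF bn a0])
    finally show ?thesis unfolding n_def .
  qed
qed

theorem theorem3:
  fixes V :: "'a set" and E :: "'a \<Rightarrow> 'a \<Rightarrow> bool" and v u :: 'a and k :: nat and \<alpha> :: real
  assumes "simple_graph V E"
    and "v \<in> V" and "u \<in> V" and "v \<noteq> u" and "\<not> E v u"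
    and "colourings V E k \<noteq> {}"
    and "{\<sigma> \<in> colourings V E k. good v u \<sigma>} \<noteq> {}"
    and "0 \<le> \<alpha>" and "\<alpha> \<le> 1"
    and "\<forall>c\<in>{1..k}. \<forall>q\<in>{1..k}. c \<noteq> q \<longrightarrow>
           alpha_iso_fun \<alpha> (colourings_vu V E k v u c c) (colourings_vu V E k v u q c)
             (\<lambda>\<sigma>. switching V E v \<sigma> q)"
  shows "tv_dist (V \<rightarrow>\<^sub>E {1..k})
           (pmf_of_set {\<sigma> \<in> colourings V E k. good v u \<sigma>})
           (bind_pmf (pmf_of_set (colourings V E k)) (STEP V E k v u))
         \<le> \<alpha>"
proof -
  define \<Omega> where "\<Omega> = colourings V E k"
  define G where "G = {\<sigma> \<in> \<Omega>. good v u \<sigma>}"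
  define Bad where "Bad = \<Omega> - G"
  define P where "P = Sigma {1..k} (\<lambda>c. {1..k} - {c})"
  define Om where "Om = (\<lambda>c q. colourings_vu V E k v u c q)"
  define \<nu> where "\<nu> = pmf_of_set G"
  define \<nu>' where "\<nu>' = bind_pmf (pmf_of_set \<Omega>) (STEP V E k v u)"
  have finV: "finite V" using assms(1) simple_graph_def by auto
  have OsubS: "\<Omega> \<subseteq> V \<rightarrow>\<^sub>E {1..k}" unfolding \<Omega>_def colourings_def by auto
  have finO: "finite \<Omega>" using OsubS finV by (meson finite_PiE finite_atLeastAtMost finite_subset)
  have One: "\<Omega> \<noteq> {}" using assms(6) \<Omega>_def by simp
  have GsubO: "G \<subseteq> \<Omega>" unfolding G_def by auto
  have finG: "finite G" using finite_subset[OF GsubO finO] .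
  have Gne: "G \<noteq> {}" using assms(7) G_def \<Omega>_def by simp
  have OmsubO: "Om c q \<subseteq> \<Omega>" for c q unfolding Om_def colourings_vu_def \<Omega>_def by auto
  have finOm: "finite (Om c q)" for c q using finite_subset[OF OmsubO finO] .
  have colv: "\<sigma> v \<in> {1..k}" if "\<sigma> \<in> \<Omega>" for \<sigma>
    using that assms(2) unfolding \<Omega>_def colourings_def by auto
  have colu: "\<sigma> u \<in> {1..k}" if "\<sigma> \<in> \<Omega>" for \<sigma>
    using that assms(3) unfolding \<Omega>_def colourings_def by auto
  obtain \<sigma>0 where \<sigma>0: "\<sigma>0 \<in> G" using Gne by auto
  have k2: "k \<ge> 2"
  proof -
    have "\<sigma>0 v \<in> {1..k}" "\<sigma>0 u \<in> {1..k}" "\<sigma>0 v \<noteq> \<sigma>0 u"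
      using \<sigma>0 colv colu GsubO unfolding G_def good_def by auto
    then show ?thesis by auto
  qed
  have finP: "finite P" unfolding P_def by auto
  define Q where "Q = (\<lambda>c q (A::('a\<Rightarrow>nat) set) (B::('a\<Rightarrow>nat) set) (h::('a\<Rightarrow>nat)\<Rightarrow>('a\<Rightarrow>nat)).
      A \<subseteq> Om c c \<and> B \<subseteq> Om q c \<and> real (card A) \<ge> (1-\<alpha>)*real (card (Om c c))
      \<and> real (card B) \<ge> (1-\<alpha>)*real (card (Om q c)) \<and> bij_betw h A B
      \<and> (\<forall>\<sigma>\<in>A. switching V E v \<sigma> q = h \<sigma>))"
  have "\<forall>p\<in>P. \<exists>t. Q (fst p) (snd p) (fst t) (fst (snd t)) (snd (snd t))"
  proof
    fix p assume "p \<in> P"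
    then obtain c q where p: "p = (c,q)" "c \<in> {1..k}" "q \<in> {1..k}" "c \<noteq> q"
      unfolding P_def by blast
    then have "alpha_iso_fun \<alpha> (Om c c) (Om q c) (\<lambda>\<sigma>. switching V E v \<sigma> q)"
      using assms(10) Om_def by auto
    then obtain A B h where "Q c q A B h" unfolding alpha_iso_fun_def Q_def by metis
    then show "\<exists>t. Q (fst p) (snd p) (fst t) (fst (snd t)) (snd (snd t))"
      using p by (intro exI[of _ "(A,B,h)"]) auto
  qed
  then obtain f where f: "\<forall>p\<in>P. Q (fst p) (snd p) (fst (f p)) (fst (snd (f p))) (snd (snd (f p)))"
    by (metis bchoice)
  define O1 where "O1 = (\<lambda>p. fst (f p))"
  define O2 where "O2 = (\<lambda>p. fst (snd (f p)))"
  define h where "h = (\<lambda>p. snd (snd (f p)))"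
  have Qp: "Q c q (O1 (c,q)) (O2 (c,q)) (h (c,q))" if "(c,q) \<in> P" for c q
    using f that unfolding O1_def O2_def h_def by force
  define W where "W = (\<Union>p\<in>P. O2 p)"

  have O2sub: "O2 p \<subseteq> Om (snd p) (fst p)" if "p \<in> P" for p
    using Qp[of "fst p" "snd p"] that unfolding Q_def by auto
  have O1sub: "O1 p \<subseteq> Om (fst p) (fst p)" if "p \<in> P" for p
    using Qp[of "fst p" "snd p"] that unfolding Q_def by auto
  have O1card: "real (card (O1 p)) \<ge> (1-\<alpha>)*real (card (Om (fst p) (fst p)))" if "p \<in> P" for p
    using Qp[of "fst p" "snd p"] that unfolding Q_def by auto
  have O2card: "real (card (O2 p)) \<ge> (1-\<alpha>)*real (card (Om (snd p) (fst p)))" if "p \<in> P" for p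
    using Qp[of "fst p" "snd p"] that unfolding Q_def by auto
  have hbij: "bij_betw (h p) (O1 p) (O2 p)" if "p \<in> P" for p
    using Qp[of "fst p" "snd p"] that unfolding Q_def by auto
  have hsw: "\<forall>\<sigma>\<in>O1 p. switching V E v \<sigma> (snd p) = h p \<sigma>" if "p \<in> P" for p
    using Qp[of "fst p" "snd p"] that unfolding Q_def by auto
  have Pmem: "p \<in> P \<longleftrightarrow> fst p \<in> {1..k} \<and> snd p \<in> {1..k} \<and> fst p \<noteq> snd p" for p
    unfolding P_def by (cases p) auto
  have WsubG: "W \<subseteq> G"
  proof
    fix \<sigma> assume "\<sigma> \<in> W"
    then obtain p where p: "p \<in> P" "\<sigma> \<in> O2 p" unfolding W_def by auto
    then have "\<sigma> \<in> Om (snd p) (fst p)" using O2sub[OF p(1)] p(2) by blast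
    then show "\<sigma> \<in> G" using p(1) Pmem[of p]
      unfolding Om_def colourings_vu_def G_def good_def \<Omega>_def by auto
  qed
  have finW: "finite W" using WsubG finG finite_subset by blast
  have disjOm: "Om (snd p) (fst p) \<inter> Om (snd p') (fst p') = {}" if "p \<noteq> p'" for p p'
    using that unfolding Om_def colourings_vu_def by (auto simp: prod_eq_iff)
  have cardW: "card W = (\<Sum>p\<in>P. card (O2 p))"
    unfolding W_def
  proof (rule card_UN_disjoint[OF finP])
    show "\<forall>i\<in>P. finite (O2 i)" using O2sub finOm finite_subset by metis
    show "\<forall>i\<in>P. \<forall>j\<in>P. i \<noteq> j \<longrightarrow> O2 i \<inter> O2 j = {}"
      using O2sub disjOm by blast
  qed
  have Geq: "G = (\<Union>p\<in>P. Om (snd p) (fst p))"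
  proof
    show "G \<subseteq> (\<Union>p\<in>P. Om (snd p) (fst p))"
    proof
      fix \<sigma> assume s: "\<sigma> \<in> G"
      then have "(\<sigma> u, \<sigma> v) \<in> P" using Pmem colv colu GsubO unfolding G_def good_def by auto
      moreover have "\<sigma> \<in> Om (\<sigma> v) (\<sigma> u)" using s unfolding G_def Om_def colourings_vu_def \<Omega>_def by auto
      ultimately show "\<sigma> \<in> (\<Union>p\<in>P. Om (snd p) (fst p))" by force
    qed
    show "(\<Union>p\<in>P. Om (snd p) (fst p)) \<subseteq> G"
      using Pmem unfolding Om_def colourings_vu_def G_def good_def \<Omega>_def by auto
  qed
  have cardG: "card G = (\<Sum>p\<in>P. card (Om (snd p) (fst p)))"
    unfolding Geq using finP finOm disjOm by (intro card_UN_disjoint) auto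
  have Badeq: "Bad = (\<Union>c\<in>{1..k}. Om c c)"
  proof (rule set_eqI)
    fix \<sigma> show "\<sigma> \<in> Bad \<longleftrightarrow> \<sigma> \<in> (\<Union>c\<in>{1..k}. Om c c)"
      using colv[of \<sigma>] unfolding Bad_def G_def Om_def colourings_vu_def good_def \<Omega>_def[symmetric]
      by auto
  qed
  have cardBad: "card Bad = (\<Sum>c\<in>{1..k}. card (Om c c))"
    unfolding Badeq
  proof (rule card_UN_disjoint)
    show "\<forall>i\<in>{1..k}. finite (Om i i)" using finOm by blast
    show "\<forall>i\<in>{1..k}. \<forall>j\<in>{1..k}. i \<noteq> j \<longrightarrow> Om i i \<inter> Om j j = {}"
      unfolding Om_def colourings_vu_def by auto
  qed simp
  have cardO: "card \<Omega> = card G + card Bad"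
    unfolding Bad_def using card_Diff_subset[OF finG GsubO] card_mono[OF finO GsubO] by simp
  have sumP: "(\<Sum>p\<in>P. card (Om (fst p) (fst p))) = (k-1) * card Bad"
  proof -
    have "(\<Sum>p\<in>P. card (Om (fst p) (fst p))) = (\<Sum>(c,q)\<in>P. card (Om c c))"
      by (simp add: case_prod_beta)
    also have "\<dots> = (\<Sum>c\<in>{1..k}. \<Sum>q\<in>{1..k}-{c}. card (Om c c))"
      unfolding P_def by (rule sum.Sigma[symmetric]) auto
    also have "\<dots> = (\<Sum>c\<in>{1..k}. (k-1) * card (Om c c))"
      by (intro sum.cong) auto
    also have "\<dots> = (k-1) * card Bad" by (simp add: cardBad sum_distrib_left)
    finally show ?thesis .
  qed
  define g where "g = real (card G)"
  define b where "b = real (card Bad)"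
  define w where "w = real (card W)"
  define N where "N = real (card \<Omega>)"
  define K where "K = real (k-1)"
  have K1: "K \<ge> 1" using k2 K_def by simp
  have gpos: "g > 0" unfolding g_def using finG Gne by (simp add: card_gt_0_iff)
  have Ngb: "N = g + b" using cardO N_def g_def b_def by simp
  have wg: "w \<le> g" using card_mono[OF finG WsubG] w_def g_def by simp
  have w1: "w \<ge> (1-\<alpha>)*g"
  proof -
    have "(1-\<alpha>)*g = (\<Sum>p\<in>P. (1-\<alpha>)*real (card (Om (snd p) (fst p))))"
      unfolding g_def cardG by (simp add: sum_distrib_left)
    also have "\<dots> \<le> (\<Sum>p\<in>P. real (card (O2 p)))" by (intro sum_mono O2card)
    also have "\<dots> = w" unfolding w_def cardW by simp
    finally show ?thesis .
  qed
  have w2: "w \<ge> (1-\<alpha>)*K*b"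
  proof -
    have "(1-\<alpha>)*K*b = (1-\<alpha>)* real (\<Sum>p\<in>P. card (Om (fst p) (fst p)))"
      unfolding K_def b_def sumP by simp
    also have "\<dots> = (\<Sum>p\<in>P. (1-\<alpha>)*real (card (Om (fst p) (fst p))))"
      by (simp add: sum_distrib_left)
    also have "\<dots> \<le> (\<Sum>p\<in>P. real (card (O1 p)))" by (intro sum_mono O1card)
    also have "\<dots> = (\<Sum>p\<in>P. real (card (O2 p)))"
      by (intro sum.cong refl) (simp add: bij_betw_same_card[OF hbij])
    also have "\<dots> = w" unfolding w_def cardW by simp
    finally show ?thesis .
  qed
  have pmfnu': "pmf \<nu>' \<sigma> = (\<Sum>X\<in>\<Omega>. pmf (STEP V E k v u X) \<sigma>) / N" for \<sigma>
    unfolding \<nu>'_def N_def by (simp add: pmf_bind integral_pmf_of_set[OF One finO])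
  have stepgood: "pmf (STEP V E k v u X) X = 1" if "X \<in> G" for X
    using that by (simp add: STEP_def G_def)
  have stepbad: "pmf (STEP V E k v u \<tau>) \<sigma> \<ge> 1/K"
    if "\<tau> \<in> \<Omega>" "\<not> good v u \<tau>" "q \<in> {1..k}" "q \<noteq> \<tau> v" "switching V E v \<tau> q = \<sigma>" for \<tau> \<sigma> q
  proof -
    define S where "S = {1..k} - {\<tau> v}"
    have Sfin: "finite S" and Sne: "S \<noteq> {}" and qS: "q \<in> S" using that S_def by auto
    have cS: "card S = k - 1" using colv[OF that(1)] S_def by simp
    have "pmf (STEP V E k v u \<tau>) \<sigma> = measure (pmf_of_set S) ((\<lambda>q. switching V E v \<tau> q) -` {\<sigma>})"
      using that(2) by (simp add: STEP_def S_def pmf_map)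
    also have "\<dots> = card (S \<inter> (\<lambda>q. switching V E v \<tau> q) -` {\<sigma>}) / card S"
      by (rule measure_pmf_of_set[OF Sne Sfin])
    also have "\<dots> \<ge> 1 / card S"
    proof -
      have "S \<inter> (\<lambda>q. switching V E v \<tau> q) -` {\<sigma>} \<noteq> {}" using qS that(5) by auto
      then have "card (S \<inter> (\<lambda>q. switching V E v \<tau> q) -` {\<sigma>}) \<ge> 1"
        using Sfin by (simp add: Suc_le_eq card_gt_0_iff)
      then show ?thesis by (intro divide_right_mono) auto
    qed
    finally show ?thesis using cS K_def by simp
  qed
  define L where "L = (\<lambda>\<sigma>. 1/N + (if \<sigma> \<in> W then 1/(N*K) else 0))"
  have Npos: "N > 0" using Ngb gpos b_def by simp
  have sumnn: "(\<Sum>X\<in>\<Omega>. pmf (STEP V E k v u X) \<sigma>) \<ge> 0" for \<sigma> by (simp add: sum_nonneg)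
  have lower: "pmf \<nu>' \<sigma> \<ge> L \<sigma>" if s: "\<sigma> \<in> G" for \<sigma>
  proof (cases "\<sigma> \<in> W")
    case False
    have "1 \<le> (\<Sum>X\<in>\<Omega>. pmf (STEP V E k v u X) \<sigma>)"
      using member_le_sum[of \<sigma> \<Omega> "\<lambda>X. pmf (STEP V E k v u X) \<sigma>"] s GsubO finO stepgood[OF s]
      by auto
    then have "1/N \<le> pmf \<nu>' \<sigma>" unfolding pmfnu' using Npos by (intro divide_right_mono) auto
    then show ?thesis using False L_def by simp
  next
    case True
    then obtain p where p: "p \<in> P" "\<sigma> \<in> O2 p" unfolding W_def by auto
    then obtain \<tau> where t: "\<tau> \<in> O1 p" "h p \<tau> = \<sigma>"
      using hbij[OF p(1)] unfolding bij_betw_def by force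
    have tO: "\<tau> \<in> Om (fst p) (fst p)" using t(1) O1sub[OF p(1)] by blast
    then have tt: "\<tau> \<in> \<Omega>" "\<not> good v u \<tau>" "\<tau> v = fst p"
      using OmsubO unfolding Om_def colourings_vu_def good_def by auto
    have sw: "switching V E v \<tau> (snd p) = \<sigma>" using hsw[OF p(1)] t by auto
    have st: "pmf (STEP V E k v u \<tau>) \<sigma> \<ge> 1/K"
      using stepbad[OF tt(1,2) _ _ sw] Pmem[of p] p(1) tt(3) by auto
    have neq: "\<tau> \<noteq> \<sigma>" using tt(2) s G_def by auto
    have "1 + 1/K \<le> (\<Sum>X\<in>{\<sigma>,\<tau>}. pmf (STEP V E k v u X) \<sigma>)"
      using neq stepgood[OF s] st by simp
    also have "\<dots> \<le> (\<Sum>X\<in>\<Omega>. pmf (STEP V E k v u X) \<sigma>)"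
      using s GsubO tt(1) finO by (intro sum_mono2) auto
    finally have "(1 + 1/K)/N \<le> pmf \<nu>' \<sigma>" unfolding pmfnu' using Npos by (intro divide_right_mono) auto
    moreover have "(1 + 1/K)/N = L \<sigma>" using True L_def Npos K1 by (simp add: field_simps)
    ultimately show ?thesis by simp
  qed
  define d where "d = (\<lambda>\<sigma>. max 0 (1/g - L \<sigma>))"
  have sumd: "(\<Sum>\<sigma>\<in>G. d \<sigma>) \<le> \<alpha>"
  proof -
    have "(\<Sum>\<sigma>\<in>G. d \<sigma>) = (\<Sum>\<sigma>\<in>G-W. d \<sigma>) + (\<Sum>\<sigma>\<in>W. d \<sigma>)"
      by (rule sum.subset_diff[OF WsubG finG])
    also have "(\<Sum>\<sigma>\<in>G-W. d \<sigma>) = (g - w) * max 0 (1/g - 1/(g+b))"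
      using card_Diff_subset[OF finW WsubG] card_mono[OF finG WsubG]
      by (simp add: d_def L_def Ngb g_def w_def of_nat_diff)
    also have "(\<Sum>\<sigma>\<in>W. d \<sigma>) = w * max 0 (1/g - 1/(g+b) - 1/((g+b)*K))"
      by (simp add: d_def L_def Ngb w_def algebra_simps)
    finally show ?thesis
      using arith_core[OF gpos _ K1 assms(8) assms(9) wg w1 w2] b_def by simp
  qed
  have key: "measure_pmf.prob \<nu> A - measure_pmf.prob \<nu>' A \<le> \<alpha>" for A
  proof -
    have finGA: "finite (G \<inter> A)" using finG by simp
    have "measure_pmf.prob \<nu> A = (\<Sum>\<sigma>\<in>G \<inter> A. 1/g)"
      unfolding \<nu>_def using measure_pmf_of_set[OF Gne finG, of A] g_def by simp
    moreover have "measure_pmf.prob \<nu>' A \<ge> (\<Sum>\<sigma>\<in>G \<inter> A. pmf \<nu>' \<sigma>)"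
    proof -
      have "measure_pmf.prob \<nu>' (G \<inter> A) \<le> measure_pmf.prob \<nu>' A"
        by (rule measure_pmf.finite_measure_mono) auto
      then show ?thesis using measure_measure_pmf_finite[OF finGA] by simp
    qed
    ultimately have "measure_pmf.prob \<nu> A - measure_pmf.prob \<nu>' A \<le> (\<Sum>\<sigma>\<in>G \<inter> A. 1/g - pmf \<nu>' \<sigma>)"
      by (simp add: sum_subtractf)
    also have "\<dots> \<le> (\<Sum>\<sigma>\<in>G \<inter> A. d \<sigma>)"
      using lower unfolding d_def by (intro sum_mono) force
    also have "\<dots> \<le> (\<Sum>\<sigma>\<in>G. d \<sigma>)"
      using finG unfolding d_def by (intro sum_mono2) auto
    finally show ?thesis using sumd by simp
  qed
  have absb: "\<bar>measure_pmf.prob \<nu> A - measure_pmf.prob \<nu>' A\<bar> \<le> \<alpha>" for A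
  proof -
    have "measure_pmf.prob \<nu> (UNIV - A) = 1 - measure_pmf.prob \<nu> A"
      using measure_pmf.prob_compl[of A \<nu>] by simp
    moreover have "measure_pmf.prob \<nu>' (UNIV - A) = 1 - measure_pmf.prob \<nu>' A"
      using measure_pmf.prob_compl[of A \<nu>'] by simp
    ultimately show ?thesis using key[of A] key[of "UNIV - A"] by linarith
  qed
  show ?thesis
    unfolding tv_dist_def \<nu>_def[symmetric] G_def[symmetric] \<Omega>_def[symmetric] \<nu>'_def[symmetric]
    by (rule cSUP_least) (use absb in auto)
qed
end
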